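(* Let $N\ge2$, $T\ge1$, $\alpha\in(0,1)$, let $S_\alpha(p)=\frac{1}{1-\alpha}\big(1-\sum_{i=1}^N p_i^\alpha\big)$ for $p\in\Delta_N$, and let $\tilde\Phi(G)=\max_{p\in\Delta_N}\{\langle p,G\rangle-\eta S_\alpha(p)\}$ with $\eta=\sqrt{\frac{T(1-\alpha)}{2\alpha}}\,N^{\alpha-\frac12}$. Then for every loss sequence $g_1,\dots,g_T\in[-1,0]^N$ fixed in advance, GBPA$(\tilde\Phi)$ satisfies \[\mathbb{E}\,\mathrm{Regret}_T\le\sqrt{\frac{2TN}{\alpha(1-\alpha)}}.\] In particular, for $\alpha=\frac12$ the expected regret is at most $2\sqrt{2TN}$.
   Context: $\Delta_N$ is the probability simplex in $\mathbb{R}^N$, $e_i$ the standard basis vector. Algorithm GBPA$(\tilde\Phi)$: set $\hat G_0=0$; for $t=1,\dots,T$: sample arm $i_t$ according to $p_t=\nabla\tilde\Phi(\hat G_{t-1})$; incur and observe only $g_{t,i_t}$; set $\hat G_t=\hat G_{t-1}+\frac{g_{t,i_t}}{p_{t,i_t}}e_{i_t}$. Regret is $\mathrm{Regret}_T=\max_{i}\sum_{t=1}^T(g_{t,i}-g_{t,i_t})$ and the expectation is over the algorithm's sampling. *)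

theory Defs
  imports "HOL-Analysis.Analysis"
begin

text \<open>Arms are indexed by a finite type 'n, so N = CARD('n). Vectors in R^N are real^'n.\<close>

definition prob_simplex :: "(real^'n) set" where
  "prob_simplex = {p. (\<forall>i. 0 \<le> p $ i) \<and> (\<Sum>i\<in>UNIV. p $ i) = 1}"

definition tsallis :: "real \<Rightarrow> real^'n \<Rightarrow> real" where
  "tsallis \<alpha> p = (1 - (\<Sum>i\<in>UNIV. (p $ i) powr \<alpha>)) / (1 - \<alpha>)"

definition tsallis_potential :: "real \<Rightarrow> real \<Rightarrow> real^'n \<Rightarrow> real" where
  "tsallis_potential \<eta> \<alpha> G = Sup ((\<lambda>p. p \<bullet> G - \<eta> * tsallis \<alpha> p) ` prob_simplex)"

definition grad :: "(real^'n \<Rightarrow> real) \<Rightarrow> real^'n \<Rightarrow> real^'n" where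
  "grad f x = (\<chi> i. frechet_derivative f (at x) (axis i 1))"

text \<open>GBPA estimated cumulative gain vector after t rounds, given the sequence of
  played arms I (I t = arm played in round t, t \<ge> 1), losses g, and potential Phi.\<close>
fun gbpa_Ghat :: "(real^'n \<Rightarrow> real) \<Rightarrow> (nat \<Rightarrow> real^'n) \<Rightarrow> (nat \<Rightarrow> 'n) \<Rightarrow> nat \<Rightarrow> real^'n" where
  "gbpa_Ghat \<Phi> g I 0 = 0"
| "gbpa_Ghat \<Phi> g I (Suc t) =
     gbpa_Ghat \<Phi> g I t
     + (g (Suc t) $ I (Suc t) / grad \<Phi> (gbpa_Ghat \<Phi> g I t) $ I (Suc t)) *\<^sub>R axis (I (Suc t)) 1"

text \<open>Probability that GBPA plays the arm sequence I(1),...,I(T).\<close>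
definition gbpa_path_prob :: "(real^'n \<Rightarrow> real) \<Rightarrow> (nat \<Rightarrow> real^'n) \<Rightarrow> nat \<Rightarrow> (nat \<Rightarrow> 'n) \<Rightarrow> real" where
  "gbpa_path_prob \<Phi> g T I = (\<Prod>t\<in>{1..T}. grad \<Phi> (gbpa_Ghat \<Phi> g I (t - 1)) $ I t)"

definition regret :: "(nat \<Rightarrow> real^'n) \<Rightarrow> nat \<Rightarrow> (nat \<Rightarrow> 'n) \<Rightarrow> real" where
  "regret g T I = (MAX i\<in>UNIV. (\<Sum>t\<in>{1..T}. g t $ i - g t $ I t))"

definition gbpa_expected_regret :: "(real^'n \<Rightarrow> real) \<Rightarrow> (nat \<Rightarrow> real^'n) \<Rightarrow> nat \<Rightarrow> real" where
  "gbpa_expected_regret \<Phi> g T =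
     (\<Sum>I\<in>PiE {1..T} (\<lambda>_. (UNIV :: 'n set)). gbpa_path_prob \<Phi> g T I * regret g T I)"

end

theory Submission
  imports Defs
begin


definition bet :: "real \<Rightarrow> real \<Rightarrow> real \<Rightarrow> real" where
  "bet \<gamma> u v = v powr \<gamma> - u powr \<gamma> + \<gamma> * v powr (\<gamma> - 1) * (u - v)"

lemma bet_taylor:
  assumes g: "0 < \<gamma>" "\<gamma> < 1" and u: "0 < u" and v: "0 < v"
  shows "\<exists>t. min u v \<le> t \<and> t \<le> max u v \<and>
           bet \<gamma> u v = \<gamma> * (1 - \<gamma>) / 2 * t powr (\<gamma> - 2) * (u - v)\<^sup>2"
proof (cases "u = v")
  case True
  then show ?thesis by (intro exI[of _ v]) (simp add: bet_def)
next
  case False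
  define diff where "diff = (\<lambda>m::nat. \<lambda>t::real. if m = 0 then t powr \<gamma>
      else if m = 1 then \<gamma> * t powr (\<gamma> - 1) else \<gamma> * ((\<gamma> - 1) * t powr (\<gamma> - 1 - 1)))"
  have D: "\<forall>m t. m < 2 \<and> min u v \<le> t \<and> t \<le> max u v \<longrightarrow> DERIV (diff m) t :> diff (Suc m) t"
  proof (intro allI impI)
    fix m :: nat and t :: real assume h: "m < 2 \<and> min u v \<le> t \<and> t \<le> max u v"
    then have t: "t > 0" using u v by linarith
    show "DERIV (diff m) t :> diff (Suc m) t"
    proof (cases "m = 0")
      case True
      then show ?thesis using has_real_derivative_powr[OF t, of \<gamma>] by (simp add: diff_def)
    next
      case False
      then have "m = 1" using h by auto
      then show ?thesis unfolding diff_def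
        using DERIV_cmult[OF has_real_derivative_powr[OF t, of "\<gamma> - 1"], of \<gamma>] by simp
    qed
  qed
  obtain t where t: "(if u < v then u < t \<and> t < v else v < t \<and> t < u)"
    and eq: "u powr \<gamma> = (\<Sum>m<2. (diff m v / fact m) * (u - v)^m) + (diff 2 t / fact 2) * (u - v)^2"
    using Taylor[of 2 diff "\<lambda>t. t powr \<gamma>" "min u v" "max u v" v u, OF _ _ D] False
    by (auto simp: diff_def)
  have "u powr \<gamma> = v powr \<gamma> + \<gamma> * v powr (\<gamma> - 1) * (u - v) + \<gamma> * (\<gamma> - 1) * t powr (\<gamma> - 2) / 2 * (u - v)^2"
    using eq by (simp add: diff_def numeral_2_eq_2 algebra_simps)
  then have "bet \<gamma> u v = - (\<gamma> * (\<gamma> - 1) * t powr (\<gamma> - 2) / 2 * (u - v)^2)"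
    unfolding bet_def by linarith
  also have "\<dots> = \<gamma> * (1 - \<gamma>) / 2 * t powr (\<gamma> - 2) * (u - v)\<^sup>2"
    by (simp add: field_simps)
  finally have "bet \<gamma> u v = \<gamma> * (1 - \<gamma>) / 2 * t powr (\<gamma> - 2) * (u - v)\<^sup>2" .
  moreover have "min u v \<le> t \<and> t \<le> max u v" using t by (auto split: if_splits)
  ultimately show ?thesis by blast
qed

lemma bet_zero: "0 < v \<Longrightarrow> bet \<gamma> 0 v = (1 - \<gamma>) * v powr \<gamma>"
  by (simp add: bet_def powr_diff algebra_simps)

lemma bet_global:
  assumes g: "0 < \<gamma>" "\<gamma> < 1" and u: "0 \<le> u" "u \<le> 1" and v: "0 < v" "v \<le> 1"
  shows "bet \<gamma> u v \<ge> \<gamma> * (1 - \<gamma>) / 2 * (u - v)\<^sup>2"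
proof (cases "u = 0")
  case True
  have "v powr 2 \<le> v powr \<gamma>" using v g by (intro powr_mono') auto
  then have "v\<^sup>2 \<le> v powr \<gamma>" using v by (simp add: powr_numeral)
  moreover have "\<gamma> * v\<^sup>2 \<le> 1 * v\<^sup>2" using g by (intro mult_right_mono) auto
  moreover have "0 \<le> \<gamma> * v\<^sup>2" using g by simp
  moreover have "\<gamma> / 2 * v\<^sup>2 = (\<gamma> * v\<^sup>2) / 2" by simp
  ultimately have "\<gamma> / 2 * v\<^sup>2 \<le> v powr \<gamma>" by linarith
  then have "(1 - \<gamma>) * (\<gamma> / 2 * v\<^sup>2) \<le> (1 - \<gamma>) * v powr \<gamma>" using g by (intro mult_left_mono) auto
  moreover have "\<gamma> * (1 - \<gamma>) / 2 * (u - v)\<^sup>2 = (1 - \<gamma>) * (\<gamma> / 2 * v\<^sup>2)"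
    using True by (simp add: field_simps)
  moreover have "bet \<gamma> u v = (1 - \<gamma>) * v powr \<gamma>" using True bet_zero[OF v(1), of \<gamma>] by simp
  ultimately show ?thesis by linarith
next
  case False
  then have u0: "u > 0" using u by auto
  obtain t where t: "min u v \<le> t" "t \<le> max u v"
    and eq: "bet \<gamma> u v = \<gamma> * (1 - \<gamma>) / 2 * t powr (\<gamma> - 2) * (u - v)\<^sup>2"
    using bet_taylor[OF g u0 v(1)] by blast
  have t0: "0 < t" "t \<le> 1" using t u0 v u by auto
  have "1 \<le> t powr (\<gamma> - 2)" using powr_mono2'[of "\<gamma> - 2" t 1] t0 g by simp
  then have "1 * ((u - v)\<^sup>2) \<le> t powr (\<gamma> - 2) * (u - v)\<^sup>2" by (intro mult_right_mono) auto
  moreover have "0 \<le> \<gamma> * (1 - \<gamma>) / 2" using g by auto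
  ultimately show ?thesis unfolding eq
    by (metis (no_types, opaque_lifting) mult.assoc mult_left_mono mult_1)
qed



lemma bet_local:
  assumes g: "0 < \<gamma>" "\<gamma> < 1" and u: "0 \<le> u" "u \<le> v" and v: "0 < v"
  shows "bet \<gamma> u v \<ge> \<gamma> * (1 - \<gamma>) / 2 * v powr (\<gamma> - 2) * (u - v)\<^sup>2"
proof (cases "u = 0")
  case True
  have "v powr (\<gamma> - 2) * v\<^sup>2 = v powr \<gamma>" using v
    by (simp add: powr_diff powr_numeral)
  then have "\<gamma> * (1 - \<gamma>) / 2 * v powr (\<gamma> - 2) * (u - v)\<^sup>2 = \<gamma> / 2 * ((1 - \<gamma>) * v powr \<gamma>)"
    using True by (simp add: field_simps)
  moreover have "\<gamma> / 2 * ((1 - \<gamma>) * v powr \<gamma>) \<le> 1 * ((1 - \<gamma>) * v powr \<gamma>)"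
    using g v by (intro mult_right_mono) auto
  moreover have "bet \<gamma> u v = (1 - \<gamma>) * v powr \<gamma>" using True bet_zero[OF v, of \<gamma>] by simp
  ultimately show ?thesis by linarith
next
  case False
  then have u0: "u > 0" using u by auto
  obtain t where t: "min u v \<le> t" "t \<le> max u v"
    and eq: "bet \<gamma> u v = \<gamma> * (1 - \<gamma>) / 2 * t powr (\<gamma> - 2) * (u - v)\<^sup>2"
    using bet_taylor[OF g u0 v] by blast
  have t0: "0 < t" "t \<le> v" using t u0 v u by auto
  have "v powr (\<gamma> - 2) \<le> t powr (\<gamma> - 2)" using powr_mono2'[of "\<gamma> - 2" t v] t0 g by simp
  then have "v powr (\<gamma> - 2) * (u - v)\<^sup>2 \<le> t powr (\<gamma> - 2) * (u - v)\<^sup>2" by (intro mult_right_mono) auto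
  moreover have "0 \<le> \<gamma> * (1 - \<gamma>) / 2" using g by auto
  ultimately show ?thesis unfolding eq
    by (metis (no_types, opaque_lifting) mult.assoc mult_left_mono)
qed

lemma bet_nonneg:
  assumes "0 < \<gamma>" "\<gamma> < 1" "0 \<le> u" "u \<le> 1" "0 < v" "v \<le> 1"
  shows "0 \<le> bet \<gamma> u v"
proof -
  have "0 \<le> \<gamma> * (1 - \<gamma>) / 2 * (u - v)\<^sup>2" using assms by auto
  then show ?thesis using bet_global[OF assms] by linarith
qed

lemma simplex_le1: "p \<in> prob_simplex \<Longrightarrow> 0 \<le> p $ i \<and> p $ i \<le> 1"
proof -
  assume p: "p \<in> prob_simplex"
  then have nn: "\<forall>j. 0 \<le> p $ j" and s: "(\<Sum>j\<in>UNIV. p $ j) = 1" by (auto simp: prob_simplex_def)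
  have "p $ i \<le> (\<Sum>j\<in>UNIV. p $ j)" using nn by (intro member_le_sum) auto
  then show ?thesis using nn s by auto
qed

lemma sum_powr_le:
  fixes p :: "real^'n"
  assumes p: "p \<in> prob_simplex" and g: "0 < \<gamma>" "\<gamma> < 1"
  shows "(\<Sum>i\<in>UNIV. p $ i powr \<gamma>) \<le> real CARD('n) powr (1 - \<gamma>)"
proof -
  define N where "N = real CARD('n)"
  have N: "N \<ge> 1" unfolding N_def by (simp add: Suc_le_eq)
  define v where "v = 1 / N"
  have v: "0 < v" "v \<le> 1" using N unfolding v_def by auto
  have "\<And>i. p $ i powr \<gamma> \<le> v powr \<gamma> + \<gamma> * v powr (\<gamma> - 1) * (p $ i - v)"
    using bet_nonneg[OF g _ _ v] simplex_le1[OF p] unfolding bet_def by smt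
  then have "(\<Sum>i\<in>UNIV. p $ i powr \<gamma>) \<le> (\<Sum>i\<in>UNIV. v powr \<gamma> + \<gamma> * v powr (\<gamma> - 1) * (p $ i - v))"
    by (intro sum_mono) auto
  also have "\<dots> = N * v powr \<gamma> + \<gamma> * v powr (\<gamma> - 1) * ((\<Sum>i\<in>UNIV. p $ i) - N * v)"
    by (simp add: sum.distrib sum_subtractf N_def flip: sum_distrib_left)
  also have "\<dots> = N * v powr \<gamma>" using p N by (simp add: prob_simplex_def v_def)
  also have "\<dots> = N powr (1 - \<gamma>)" using N
    by (simp add: v_def powr_divide powr_diff)
  finally show ?thesis unfolding N_def .
qed



definition obj :: "real \<Rightarrow> real \<Rightarrow> real^'n \<Rightarrow> real^'n \<Rightarrow> real" where
  "obj \<eta> \<alpha> G q = q \<bullet> G - \<eta> * tsallis \<alpha> q"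

definition opt :: "real \<Rightarrow> real \<Rightarrow> real^'n \<Rightarrow> real^'n \<Rightarrow> bool" where
  "opt \<eta> \<alpha> G p \<longleftrightarrow> p \<in> prob_simplex \<and> (\<forall>j. 0 < p $ j) \<and>
     (\<exists>l. \<forall>j. G $ j + \<eta> * \<alpha> / (1 - \<alpha>) * p $ j powr (\<alpha> - 1) = l)"

lemma inner_vec_real: "(x::real^'n) \<bullet> y = (\<Sum>i\<in>UNIV. x $ i * y $ i)"
  by (simp add: inner_vec_def)

lemma opt_exists:
  fixes G :: "real^'n"
  assumes eta: "0 < \<eta>" and a: "0 < \<alpha>" "\<alpha> < 1"
  shows "\<exists>p. opt \<eta> \<alpha> G p"
proof -
  define K where "K = \<eta> * \<alpha> / (1 - \<alpha>)"
  define e where "e = 1 / (1 - \<alpha>)"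
  define N where "N = real CARD('n)"
  have K: "K > 0" using eta a by (simp add: K_def)
  have e: "e > 0" using a by (simp add: e_def)
  have N: "N \<ge> 1" unfolding N_def by (simp add: Suc_le_eq)
  define m where "m = Max (range (\<lambda>j. G $ j))"
  have mge: "\<And>j. G $ j \<le> m" unfolding m_def by (intro Max_ge) auto
  have "m \<in> range (\<lambda>j. G $ j)" unfolding m_def by (intro Max_in) auto
  then obtain j0 where j0: "G $ j0 = m" by auto
  define \<sigma> where "\<sigma> = (\<lambda>l. \<Sum>j\<in>UNIV. (K / (l - G $ j)) powr e)"
  define l0 where "l0 = m + K"
  define l1 where "l1 = m + K * N powr (1 - \<alpha>)"
  have Np: "1 \<le> N powr (1 - \<alpha>)" using N a by (intro ge_one_powr_ge_zero) auto
  have l01: "l0 \<le> l1" unfolding l0_def l1_def using K Np by simp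
  have pos: "\<And>l j. l0 \<le> l \<Longrightarrow> K \<le> l - G $ j" unfolding l0_def using mge
    by (smt (verit))
  have nz: "\<And>x j. x \<in> {l0..l1} \<Longrightarrow> x - G $ j \<noteq> 0 \<and> K / (x - G $ j) \<noteq> 0"
  proof -
    fix x j assume "x \<in> {l0..l1}"
    then have "K \<le> x - G $ j" using pos by auto
    then show "x - G $ j \<noteq> 0 \<and> K / (x - G $ j) \<noteq> 0" using K by auto
  qed
  have cont: "continuous_on {l0..l1} \<sigma>" unfolding \<sigma>_def
    using nz by (intro continuous_intros) auto
  have s0: "1 \<le> \<sigma> l0"
  proof -
    have "(K / (l0 - G $ j0)) powr e = 1" using j0 K by (simp add: l0_def)
    moreover have "(K / (l0 - G $ j0)) powr e \<le> \<sigma> l0" unfolding \<sigma>_def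
      by (intro member_le_sum) auto
    ultimately show ?thesis by simp
  qed
  have s1: "\<sigma> l1 \<le> 1"
  proof -
    have "\<And>j. (K / (l1 - G $ j)) powr e \<le> 1 / N"
    proof -
      fix j
      have d: "K * N powr (1 - \<alpha>) \<le> l1 - G $ j" unfolding l1_def using mge[of j] by simp
      have dp: "0 < K * N powr (1 - \<alpha>)" using K N by simp
      have "K / (l1 - G $ j) \<le> K / (K * N powr (1 - \<alpha>))"
        using d dp K by (intro divide_left_mono) auto
      also have "\<dots> = N powr (-(1 - \<alpha>))" using K by (simp only: powr_minus_divide) simp
      finally have "(K / (l1 - G $ j)) powr e \<le> (N powr (-(1 - \<alpha>))) powr e"
        using K d dp e by (intro powr_mono2) auto
      also have "\<dots> = N powr (-(1 - \<alpha>) * e)" by (rule powr_powr)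
      also have "-(1 - \<alpha>) * e = -1" using a by (simp add: e_def field_simps)
      also have "N powr (-1) = 1 / N" using N by (simp add: powr_minus_divide)
      finally show "(K / (l1 - G $ j)) powr e \<le> 1 / N" .
    qed
    then have "\<sigma> l1 \<le> of_nat (card (UNIV::'n set)) * (1 / N)" unfolding \<sigma>_def
      by (intro sum_bounded_above) auto
    then show ?thesis using N by (simp add: N_def)
  qed
  obtain l where l: "l0 \<le> l" "l \<le> l1" "\<sigma> l = 1"
    using IVT2'[of \<sigma> l1 1 l0, OF s1 s0 l01 cont] by blast
  define p where "p = (\<chi> j. (K / (l - G $ j)) powr e)"
  have pj: "\<And>j. p $ j = (K / (l - G $ j)) powr e" unfolding p_def by simp
  have ppos: "\<And>j. 0 < p $ j" unfolding pj using pos[OF l(1)] K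
    by (metis divide_pos_pos order_less_le_trans powr_gt_zero less_numeral_extra(3))
  have psum: "(\<Sum>j\<in>UNIV. p $ j) = 1" using l(3) unfolding \<sigma>_def pj .
  have foc: "\<And>j. G $ j + K * p $ j powr (\<alpha> - 1) = l"
  proof -
    fix j
    have "p $ j powr (\<alpha> - 1) = (K / (l - G $ j)) powr (e * (\<alpha> - 1))" by (simp add: pj powr_powr)
    also have "e * (\<alpha> - 1) = -1" using a by (simp add: e_def field_simps)
    also have "(K / (l - G $ j)) powr (-1) = (l - G $ j) / K" using pos[OF l(1), of j] K
      by (simp add: powr_minus_divide)
    finally show "G $ j + K * p $ j powr (\<alpha> - 1) = l" using K by simp
  qed
  have "opt \<eta> \<alpha> G p" unfolding opt_def prob_simplex_def
    using ppos psum foc less_imp_le unfolding K_def by blast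
  then show ?thesis by blast
qed



lemma obj_expand:
  assumes a: "\<alpha> < 1"
  shows "obj \<eta> \<alpha> G q = (\<Sum>j\<in>UNIV. q $ j * G $ j + \<eta> / (1 - \<alpha>) * q $ j powr \<alpha>) - \<eta> / (1 - \<alpha>)"
proof -
  have "\<eta> * tsallis \<alpha> q = \<eta> / (1 - \<alpha>) - \<eta> / (1 - \<alpha>) * (\<Sum>j\<in>UNIV. q $ j powr \<alpha>)"
    unfolding tsallis_def by (simp add: diff_divide_distrib right_diff_distrib)
  then show ?thesis unfolding obj_def inner_vec_real
    by (simp add: sum.distrib sum_distrib_left mult.commute)
qed

lemma opt_identity:
  assumes a: "\<alpha> < 1" and o: "opt \<eta> \<alpha> G p" and q: "q \<in> prob_simplex"
  shows "obj \<eta> \<alpha> G q = obj \<eta> \<alpha> G p - \<eta> / (1 - \<alpha>) * (\<Sum>j\<in>UNIV. bet \<alpha> (q $ j) (p $ j))"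
proof -
  define c where "c = \<eta> / (1 - \<alpha>)"
  obtain l where foc: "\<And>j. G $ j + \<eta> * \<alpha> / (1 - \<alpha>) * p $ j powr (\<alpha> - 1) = l"
    using o unfolding opt_def by blast
  have ps: "(\<Sum>j\<in>UNIV. p $ j) = 1" and qs: "(\<Sum>j\<in>UNIV. q $ j) = 1"
    using o q unfolding opt_def prob_simplex_def by auto
  have each: "\<And>j. (q $ j * G $ j + c * q $ j powr \<alpha>) - (p $ j * G $ j + c * p $ j powr \<alpha>)
      + c * bet \<alpha> (q $ j) (p $ j) = (q $ j - p $ j) * l"
  proof -
    fix j
    have Gj: "G $ j = l - c * \<alpha> * p $ j powr (\<alpha> - 1)" using foc[of j] unfolding c_def by simp
    show "?thesis j" unfolding bet_def Gj by (simp add: algebra_simps)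
  qed
  have "(\<Sum>j\<in>UNIV. (q $ j * G $ j + c * q $ j powr \<alpha>) - (p $ j * G $ j + c * p $ j powr \<alpha>)
      + c * bet \<alpha> (q $ j) (p $ j)) = (\<Sum>j\<in>UNIV. (q $ j - p $ j) * l)"
    using each by simp
  also have "\<dots> = 0" using ps qs by (simp add: sum_distrib_right[symmetric] sum_subtractf)
  finally have "(\<Sum>j\<in>UNIV. q $ j * G $ j + c * q $ j powr \<alpha>) - (\<Sum>j\<in>UNIV. p $ j * G $ j + c * p $ j powr \<alpha>)
      + c * (\<Sum>j\<in>UNIV. bet \<alpha> (q $ j) (p $ j)) = 0"
    by (simp add: sum.distrib sum_subtractf sum_distrib_left)
  then show ?thesis using obj_expand[OF a, of \<eta> G q] obj_expand[OF a, of \<eta> G p]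
    unfolding c_def by linarith
qed



definition P :: "real \<Rightarrow> real \<Rightarrow> real^'n \<Rightarrow> real^'n" where
  "P \<eta> \<alpha> G = (SOME p. opt \<eta> \<alpha> G p)"

locale tpar =
  fixes \<eta> \<alpha> :: real
  assumes eta: "0 < \<eta>" and a0: "0 < \<alpha>" and a1: "\<alpha> < 1"
begin

abbreviation "\<Phi> \<equiv> tsallis_potential \<eta> \<alpha>"

lemma P_opt: "opt \<eta> \<alpha> G (P \<eta> \<alpha> G)"
  unfolding P_def using opt_exists[OF eta a0 a1, of G] by (rule someI_ex)

lemma P_simplex: "P \<eta> \<alpha> G \<in> prob_simplex" using P_opt unfolding opt_def by blast
lemma P_pos: "0 < P \<eta> \<alpha> G $ j" using P_opt unfolding opt_def by blast
lemma P_le1: "P \<eta> \<alpha> G $ j \<le> 1" using simplex_le1[OF P_simplex] by blast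
lemma P_sum: "(\<Sum>j\<in>UNIV. P \<eta> \<alpha> G $ j) = 1" using P_simplex unfolding prob_simplex_def by blast

lemma sum_bet_nonneg:
  assumes "q \<in> prob_simplex"
  shows "0 \<le> (\<Sum>j\<in>UNIV. bet \<alpha> (q $ j) (P \<eta> \<alpha> G $ j))"
  by (intro sum_nonneg bet_nonneg[OF a0 a1]) (use simplex_le1[OF assms] P_pos P_le1 in auto)

lemma obj_le:
  assumes q: "q \<in> prob_simplex"
  shows "obj \<eta> \<alpha> G q \<le> obj \<eta> \<alpha> G (P \<eta> \<alpha> G)"
proof -
  have "0 \<le> \<eta> / (1 - \<alpha>) * (\<Sum>j\<in>UNIV. bet \<alpha> (q $ j) (P \<eta> \<alpha> G $ j))"
    using sum_bet_nonneg[OF q] eta a1 by simp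
  then show ?thesis using opt_identity[OF a1 P_opt[of G] q] by linarith
qed

lemma pot_eq: "\<Phi> G = obj \<eta> \<alpha> G (P \<eta> \<alpha> G)"
  unfolding tsallis_potential_def
proof (rule cSup_eq_maximum)
  show "obj \<eta> \<alpha> G (P \<eta> \<alpha> G) \<in> (\<lambda>p. p \<bullet> G - \<eta> * tsallis \<alpha> p) ` prob_simplex"
    using P_simplex unfolding obj_def by blast
  show "\<And>x. x \<in> (\<lambda>p. p \<bullet> G - \<eta> * tsallis \<alpha> p) ` prob_simplex \<Longrightarrow> x \<le> obj \<eta> \<alpha> G (P \<eta> \<alpha> G)"
    using obj_le unfolding obj_def by blast
qed

lemma pot_ge: "q \<in> prob_simplex \<Longrightarrow> obj \<eta> \<alpha> G q \<le> \<Phi> G"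
  using obj_le[of q G] pot_eq[of G] by simp

lemma obj_shift: "obj \<eta> \<alpha> (G + h) q = obj \<eta> \<alpha> G q + q \<bullet> h"
  unfolding obj_def by (simp add: inner_add_right)

lemma pot_diff:
  "\<Phi> (G + h) - \<Phi> G - P \<eta> \<alpha> G \<bullet> h =
    (\<Sum>j\<in>UNIV. (P \<eta> \<alpha> (G + h) $ j - P \<eta> \<alpha> G $ j) * h $ j
       - \<eta> / (1 - \<alpha>) * bet \<alpha> (P \<eta> \<alpha> (G + h) $ j) (P \<eta> \<alpha> G $ j))"
proof -
  let ?q = "P \<eta> \<alpha> (G + h)" and ?p = "P \<eta> \<alpha> G"
  have "\<Phi> (G + h) = obj \<eta> \<alpha> G ?q + ?q \<bullet> h" using pot_eq[of "G+h"] obj_shift by simp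
  also have "obj \<eta> \<alpha> G ?q = \<Phi> G - \<eta> / (1 - \<alpha>) * (\<Sum>j\<in>UNIV. bet \<alpha> (?q $ j) (?p $ j))"
    using opt_identity[OF a1 P_opt[of G] P_simplex[of "G+h"]] pot_eq[of G] by simp
  finally have "\<Phi> (G + h) - \<Phi> G - ?p \<bullet> h
      = (?q - ?p) \<bullet> h - \<eta> / (1 - \<alpha>) * (\<Sum>j\<in>UNIV. bet \<alpha> (?q $ j) (?p $ j))"
    by (simp add: inner_diff_left)
  then show ?thesis
    by (simp add: inner_vec_real sum_subtractf sum_distrib_left)
qed

lemma pot_lower: "\<Phi> G + P \<eta> \<alpha> G \<bullet> h \<le> \<Phi> (G + h)"
  using pot_ge[OF P_simplex[of G], of "G + h"] obj_shift[of G h "P \<eta> \<alpha> G"] pot_eq[of G] by simp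

lemma quad: "0 < a \<Longrightarrow> d * h - a * d\<^sup>2 \<le> h\<^sup>2 / (4 * a)" for a d h :: real
proof -
  assume a: "0 < a"
  have "(2 * a * d - h)\<^sup>2 = h\<^sup>2 - 4 * a * (d * h - a * d\<^sup>2)"
    by (simp add: power2_eq_square algebra_simps)
  moreover have "0 \<le> (2 * a * d - h)\<^sup>2" by simp
  ultimately have "(d * h - a * d\<^sup>2) * (4 * a) \<le> h\<^sup>2" by (simp add: mult.commute)
  then show ?thesis using a by (simp add: pos_le_divide_eq)
qed

lemma pot_quad:
  "\<bar>\<Phi> (G + h) - \<Phi> G - P \<eta> \<alpha> G \<bullet> h\<bar> \<le> (norm h)\<^sup>2 / (2 * \<eta> * \<alpha>)"
proof -
  let ?q = "P \<eta> \<alpha> (G + h)" and ?p = "P \<eta> \<alpha> G"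
  have trm: "\<And>j. (?q $ j - ?p $ j) * h $ j - \<eta> / (1 - \<alpha>) * bet \<alpha> (?q $ j) (?p $ j)
      \<le> (h $ j)\<^sup>2 / (2 * \<eta> * \<alpha>)"
  proof -
    fix j
    have b: "bet \<alpha> (?q $ j) (?p $ j) \<ge> \<alpha> * (1 - \<alpha>) / 2 * (?q $ j - ?p $ j)\<^sup>2"
      by (rule bet_global[OF a0 a1]) (use simplex_le1[OF P_simplex] P_pos P_le1 in auto)
    have "\<eta> / (1 - \<alpha>) * (\<alpha> * (1 - \<alpha>) / 2 * (?q $ j - ?p $ j)\<^sup>2) \<le> \<eta> / (1 - \<alpha>) * bet \<alpha> (?q $ j) (?p $ j)"
      using b eta a1 by (intro mult_left_mono) auto
    moreover have "\<eta> / (1 - \<alpha>) * (\<alpha> * (1 - \<alpha>) / 2 * (?q $ j - ?p $ j)\<^sup>2) = (\<eta> * \<alpha> / 2) * (?q $ j - ?p $ j)\<^sup>2"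
      using a1 by (simp add: field_simps)
    moreover have "(?q $ j - ?p $ j) * h $ j - (\<eta> * \<alpha> / 2) * (?q $ j - ?p $ j)\<^sup>2 \<le> (h $ j)\<^sup>2 / (4 * (\<eta> * \<alpha> / 2))"
      using eta a0 by (intro quad) auto
    moreover have "(h $ j)\<^sup>2 / (4 * (\<eta> * \<alpha> / 2)) = (h $ j)\<^sup>2 / (2 * \<eta> * \<alpha>)" by simp
    ultimately show "?thesis j" by linarith
  qed
  have "\<Phi> (G + h) - \<Phi> G - ?p \<bullet> h \<le> (\<Sum>j\<in>UNIV. (h $ j)\<^sup>2 / (2 * \<eta> * \<alpha>))"
    unfolding pot_diff by (intro sum_mono trm)
  also have "\<dots> = (\<Sum>j\<in>UNIV. (h $ j)\<^sup>2) / (2 * \<eta> * \<alpha>)"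
    by (simp add: sum_divide_distrib)
  also have "(\<Sum>j\<in>UNIV. (h $ j)\<^sup>2) = (norm h)\<^sup>2"
    by (subst power2_norm_eq_inner) (simp add: inner_vec_real power2_eq_square)
  finally have up: "\<Phi> (G + h) - \<Phi> G - ?p \<bullet> h \<le> (norm h)\<^sup>2 / (2 * \<eta> * \<alpha>)" .
  have lo: "0 \<le> \<Phi> (G + h) - \<Phi> G - ?p \<bullet> h" using pot_lower[of G h] by simp
  show ?thesis using up lo by simp
qed

end



context tpar
begin

lemma pot_deriv: "(\<Phi> has_derivative (\<lambda>h. P \<eta> \<alpha> G \<bullet> h)) (at G)"
  unfolding has_derivative_iff_norm
proof
  show "bounded_linear (\<lambda>h. P \<eta> \<alpha> G \<bullet> h)" by (rule bounded_linear_inner_right)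
  have bd: "norm (norm (\<Phi> y - \<Phi> G - P \<eta> \<alpha> G \<bullet> (y - G)) / norm (y - G)) \<le> norm (y - G) / (2 * \<eta> * \<alpha>)" for y
  proof (cases "y = G")
    case True then show ?thesis by simp
  next
    case False
    then have n: "norm (y - G) > 0" by simp
    have ne: "2 * \<eta> * \<alpha> \<noteq> 0" using eta a0 by auto
    have "\<bar>\<Phi> (G + (y - G)) - \<Phi> G - P \<eta> \<alpha> G \<bullet> (y - G)\<bar> \<le> (norm (y - G))\<^sup>2 / (2 * \<eta> * \<alpha>)"
      by (rule pot_quad)
    then have "\<bar>\<Phi> y - \<Phi> G - P \<eta> \<alpha> G \<bullet> (y - G)\<bar> / norm (y - G) \<le> ((norm (y - G))\<^sup>2 / (2 * \<eta> * \<alpha>)) / norm (y - G)"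
      using n by (intro divide_right_mono) auto
    also have "\<dots> = norm (y - G) / (2 * \<eta> * \<alpha>)" using n by (simp add: power2_eq_square)
    finally have "\<bar>\<Phi> y - \<Phi> G - P \<eta> \<alpha> G \<bullet> (y - G)\<bar> / norm (y - G) \<le> norm (y - G) / (2 * \<eta> * \<alpha>)" .
    then show ?thesis by simp
  qed
  have "((\<lambda>y. norm (y - G) / (2 * \<eta> * \<alpha>)) \<longlongrightarrow> norm (G - G) / (2 * \<eta> * \<alpha>)) (at G)"
    by (intro tendsto_divide tendsto_norm tendsto_diff tendsto_ident_at tendsto_const) (use eta a0 in auto)
  then have lim0: "((\<lambda>y. norm (y - G) / (2 * \<eta> * \<alpha>)) \<longlongrightarrow> 0) (at G)" by simp
  show "((\<lambda>y. norm (\<Phi> y - \<Phi> G - P \<eta> \<alpha> G \<bullet> (y - G)) / norm (y - G)) \<longlongrightarrow> 0) (at G)"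
    by (rule Lim_null_comparison[OF always_eventually[OF allI[OF bd]] lim0])
qed

lemma grad_pot: "grad \<Phi> G = P \<eta> \<alpha> G"
proof -
  have "frechet_derivative \<Phi> (at G) = (\<lambda>h. P \<eta> \<alpha> G \<bullet> h)"
    using frechet_derivative_at[OF pot_deriv[of G]] by simp
  then show ?thesis unfolding grad_def by (simp add: vec_eq_iff inner_axis)
qed

lemma pot_ge_coord: "G $ i \<le> \<Phi> G"
proof -
  have ax: "axis i (1::real) \<in> prob_simplex"
    unfolding prob_simplex_def by (auto simp: axis_def)
  have "(\<Sum>j\<in>UNIV. (axis i (1::real)) $ j powr \<alpha>) = (\<Sum>j\<in>UNIV. if j = i then 1 else 0)"
    by (rule sum.cong) (auto simp: axis_def)
  then have "tsallis \<alpha> (axis i (1::real)) = 0"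
    unfolding tsallis_def by simp
  then have "obj \<eta> \<alpha> G (axis i 1) = G $ i" unfolding obj_def by (simp add: inner_axis')
  then show ?thesis using pot_ge[OF ax, of G] by simp
qed

lemma pot_zero: "\<Phi> (0::real^'n::finite) \<le> \<eta> * real CARD('n) powr (1 - \<alpha>) / (1 - \<alpha>)"
proof -
  let ?p = "P \<eta> \<alpha> (0::real^'n::finite)"
  have e: "\<Phi> (0::real^'n::finite) = obj \<eta> \<alpha> 0 ?p" by (rule pot_eq)
  have "\<Phi> (0::real^'n::finite) = - \<eta> * tsallis \<alpha> ?p" unfolding e by (simp add: obj_def)
  also have "\<dots> = \<eta> / (1 - \<alpha>) * ((\<Sum>i\<in>UNIV. ?p $ i powr \<alpha>) - 1)"
    unfolding tsallis_def by (simp add: field_simps)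
  also have "\<dots> \<le> \<eta> / (1 - \<alpha>) * (real CARD('n) powr (1 - \<alpha>) - 0)"
    using sum_powr_le[OF P_simplex[of "0::real^'n::finite"] a0 a1] eta a1 by (intro mult_left_mono) auto
  finally show ?thesis by simp
qed

lemma step_bound:
  assumes x: "x \<le> 0"
  shows "\<Phi> (G + x *\<^sub>R axis i 1) - \<Phi> G - P \<eta> \<alpha> G $ i * x
          \<le> x\<^sup>2 / (2 * \<eta> * \<alpha> * P \<eta> \<alpha> G $ i powr (\<alpha> - 2))"
proof -
  let ?h = "x *\<^sub>R axis i (1::real)"
  let ?q = "P \<eta> \<alpha> (G + ?h)" and ?p = "P \<eta> \<alpha> G"
  define B where "B = x\<^sup>2 / (2 * \<eta> * \<alpha> * ?p $ i powr (\<alpha> - 2))"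
  have B0: "0 \<le> B" unfolding B_def using eta a0 by simp
  have bn: "\<And>j. 0 \<le> bet \<alpha> (?q $ j) (?p $ j)"
    by (rule bet_nonneg[OF a0 a1]) (use simplex_le1[OF P_simplex] P_pos P_le1 in auto)
  have c0: "0 \<le> \<eta> / (1 - \<alpha>)" using eta a1 by simp
  have trm: "(?q $ j - ?p $ j) * ?h $ j - \<eta> / (1 - \<alpha>) * bet \<alpha> (?q $ j) (?p $ j)
      \<le> (if j = i then B else 0)" for j
  proof (cases "j = i")
    case False
    then show ?thesis using mult_nonneg_nonneg[OF c0 bn[of j]] by (simp add: axis_def)
  next
    case True
    then have hj: "?h $ j = x" by (simp add: axis_def)
    show ?thesis
    proof (cases "?q $ i \<ge> ?p $ i")
      case True
      then have "(?q $ i - ?p $ i) * x \<le> 0" using x by (simp add: mult_nonneg_nonpos)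
      then show ?thesis using \<open>j = i\<close> hj bn[of i] c0 B0
        by (smt (verit) mult_nonneg_nonneg)
    next
      case False
      define pi where "pi = ?p $ i"
      have pi: "0 < pi" unfolding pi_def by (rule P_pos)
      have b: "bet \<alpha> (?q $ i) pi \<ge> \<alpha> * (1 - \<alpha>) / 2 * pi powr (\<alpha> - 2) * (?q $ i - pi)\<^sup>2"
        using False by (intro bet_local[OF a0 a1]) (use simplex_le1[OF P_simplex] pi in \<open>auto simp: pi_def\<close>)
      have "\<eta> / (1 - \<alpha>) * (\<alpha> * (1 - \<alpha>) / 2 * pi powr (\<alpha> - 2) * (?q $ i - pi)\<^sup>2) \<le> \<eta> / (1 - \<alpha>) * bet \<alpha> (?q $ i) pi"
        using b c0 by (intro mult_left_mono) auto
      moreover have "\<eta> / (1 - \<alpha>) * (\<alpha> * (1 - \<alpha>) / 2 * pi powr (\<alpha> - 2) * (?q $ i - pi)\<^sup>2)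
          = (\<eta> * \<alpha> / 2 * pi powr (\<alpha> - 2)) * (?q $ i - pi)\<^sup>2"
        using a1 by (simp add: field_simps)
      moreover have "(?q $ i - pi) * x - (\<eta> * \<alpha> / 2 * pi powr (\<alpha> - 2)) * (?q $ i - pi)\<^sup>2
          \<le> x\<^sup>2 / (4 * (\<eta> * \<alpha> / 2 * pi powr (\<alpha> - 2)))"
        using eta a0 pi by (intro quad) auto
      moreover have "x\<^sup>2 / (4 * (\<eta> * \<alpha> / 2 * pi powr (\<alpha> - 2))) = B"
        unfolding B_def pi_def by simp
      ultimately show ?thesis using \<open>j = i\<close> hj unfolding pi_def by simp
    qed
  qed
  have "\<Phi> (G + ?h) - \<Phi> G - ?p \<bullet> ?h \<le> (\<Sum>j\<in>UNIV. if j = i then B else 0)"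
    unfolding pot_diff by (intro sum_mono trm)
  also have "\<dots> = B" by simp
  finally show ?thesis unfolding B_def by (simp add: inner_axis mult.commute)
qed

end



lemma Ghat_local:
  "(\<And>r. 1 \<le> r \<Longrightarrow> r \<le> t \<Longrightarrow> I r = J r) \<Longrightarrow> gbpa_Ghat F g I t = gbpa_Ghat F g J t"
proof (induction t)
  case 0 then show ?case by simp
next
  case (Suc t)
  then have "gbpa_Ghat F g I t = gbpa_Ghat F g J t" by simp
  moreover have "I (Suc t) = J (Suc t)" using Suc.prems by simp
  ultimately show ?case by simp
qed

lemma pathprob_upd:
  "gbpa_path_prob F g (Suc t) (h(Suc t := y)) = gbpa_path_prob F g t h * grad F (gbpa_Ghat F g h t) $ y"
proof -
  have loc: "\<And>s. s \<le> t \<Longrightarrow> gbpa_Ghat F g (h(Suc t := y)) s = gbpa_Ghat F g h s"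
    by (rule Ghat_local) auto
  have "(\<Prod>s\<in>{1..t}. grad F (gbpa_Ghat F g (h(Suc t := y)) (s - 1)) $ (h(Suc t := y)) s)
      = (\<Prod>s\<in>{1..t}. grad F (gbpa_Ghat F g h (s - 1)) $ h s)"
    by (rule prod.cong) (auto simp: loc)
  then show ?thesis unfolding gbpa_path_prob_def using loc[of t] by simp
qed

lemma tower:
  fixes F :: "real^'n \<Rightarrow> real" and H :: "(nat \<Rightarrow> 'n) \<Rightarrow> real"
  shows "(\<Sum>I\<in>PiE {1..Suc t} (\<lambda>_. UNIV). gbpa_path_prob F g (Suc t) I * H I)
       = (\<Sum>I\<in>PiE {1..t} (\<lambda>_. UNIV). gbpa_path_prob F g t I *
            (\<Sum>i\<in>UNIV. grad F (gbpa_Ghat F g I t) $ i * H (I(Suc t := i))))"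
proof -
  have dom: "{1..Suc t} = insert (Suc t) {1..t}" by auto
  have inj: "inj_on (\<lambda>(y, h). h(Suc t := y)) ((UNIV::'n set) \<times> PiE {1..t} (\<lambda>_. UNIV))"
    using inj_combinator[of "Suc t" "{1..t}" "\<lambda>_. (UNIV::'n set)"] by simp
  have "(\<Sum>I\<in>PiE {1..Suc t} (\<lambda>_. UNIV). gbpa_path_prob F g (Suc t) I * H I)
      = (\<Sum>I\<in>(\<lambda>(y, h). h(Suc t := y)) ` ((UNIV::'n set) \<times> PiE {1..t} (\<lambda>_. UNIV)).
           gbpa_path_prob F g (Suc t) I * H I)"
    unfolding dom PiE_insert_eq by simp
  also have "\<dots> = (\<Sum>(y, h)\<in>(UNIV::'n set) \<times> PiE {1..t} (\<lambda>_. UNIV).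
           gbpa_path_prob F g (Suc t) (h(Suc t := y)) * H (h(Suc t := y)))"
    by (subst sum.reindex[OF inj]) (simp add: case_prod_beta)
  also have "\<dots> = (\<Sum>y\<in>UNIV. \<Sum>h\<in>PiE {1..t} (\<lambda>_. UNIV).
           gbpa_path_prob F g (Suc t) (h(Suc t := y)) * H (h(Suc t := y)))"
    by (rule sum.cartesian_product[symmetric])
  also have "\<dots> = (\<Sum>h\<in>PiE {1..t} (\<lambda>_. UNIV). \<Sum>y\<in>UNIV.
           gbpa_path_prob F g (Suc t) (h(Suc t := y)) * H (h(Suc t := y)))"
    by (rule sum.swap)
  also have "\<dots> = (\<Sum>h\<in>PiE {1..t} (\<lambda>_. UNIV). gbpa_path_prob F g t h *
            (\<Sum>i\<in>UNIV. grad F (gbpa_Ghat F g h t) $ i * H (h(Suc t := i))))"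
    by (simp add: pathprob_upd sum_distrib_left mult.assoc)
  finally show ?thesis .
qed



definition Ex :: "(real^'n \<Rightarrow> real) \<Rightarrow> (nat \<Rightarrow> real^'n) \<Rightarrow> nat \<Rightarrow> ((nat \<Rightarrow> 'n) \<Rightarrow> real) \<Rightarrow> real" where
  "Ex F g t H = (\<Sum>I\<in>PiE {1..t} (\<lambda>_. UNIV). gbpa_path_prob F g t I * H I)"

lemma Ex_Suc: "Ex F g (Suc t) H = Ex F g t (\<lambda>I. \<Sum>i\<in>UNIV. grad F (gbpa_Ghat F g I t) $ i * H (I(Suc t := i)))"
  unfolding Ex_def by (rule tower)

lemma Ex_0: "Ex F g 0 H = H (\<lambda>_. undefined)"
  unfolding Ex_def gbpa_path_prob_def by simp

lemma Ex_add: "Ex F g t (\<lambda>I. H1 I + H2 I) = Ex F g t H1 + Ex F g t H2"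
  unfolding Ex_def by (simp add: sum.distrib distrib_left)

lemma Ex_diff: "Ex F g t (\<lambda>I. H1 I - H2 I) = Ex F g t H1 - Ex F g t H2"
  unfolding Ex_def by (simp add: sum_subtractf right_diff_distrib)

lemma Ex_cmult: "Ex F g t (\<lambda>I. c * H I) = c * Ex F g t H"
  unfolding Ex_def by (simp add: sum_distrib_left mult.left_commute)

context tpar
begin

lemma grad_eq: "grad (\<Phi> :: real^'n::finite \<Rightarrow> real) = P \<eta> \<alpha>"
  by (rule ext) (rule grad_pot)

lemma pathprob_nonneg: "0 \<le> gbpa_path_prob \<Phi> g t (I :: nat \<Rightarrow> 'n::finite)"
  unfolding gbpa_path_prob_def grad_eq by (intro prod_nonneg less_imp_le[OF P_pos])

lemma Ex_one: "Ex \<Phi> g t (\<lambda>I::nat \<Rightarrow> 'n::finite. 1) = 1"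
proof (induction t)
  case 0 then show ?case by (simp add: Ex_0)
next
  case (Suc t)
  then show ?case by (simp add: Ex_Suc grad_eq P_sum)
qed

lemma Ex_const: "Ex \<Phi> g t (\<lambda>I::nat \<Rightarrow> 'n::finite. c) = c"
  by (metis Ex_cmult[of \<Phi> g t c "\<lambda>_. 1"] Ex_one mult.right_neutral)

lemma Ex_mono:
  assumes "\<And>I. I \<in> PiE {1..t} (\<lambda>_. UNIV) \<Longrightarrow> H1 I \<le> H2 (I::nat \<Rightarrow> 'n::finite)"
  shows "Ex \<Phi> g t H1 \<le> Ex \<Phi> g t H2"
  unfolding Ex_def using assms pathprob_nonneg by (intro sum_mono mult_left_mono) auto

lemma Ghat_Suc_upd:
  "gbpa_Ghat \<Phi> g (I(Suc t := i)) (Suc t)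
     = gbpa_Ghat \<Phi> g I t + (g (Suc t) $ i / P \<eta> \<alpha> (gbpa_Ghat \<Phi> g I t) $ i) *\<^sub>R axis i 1"
proof -
  have "gbpa_Ghat \<Phi> g (I(Suc t := i)) t = gbpa_Ghat \<Phi> g I t" by (rule Ghat_local) auto
  then show ?thesis by (simp add: grad_eq)
qed

lemma Ex_mart: "Ex \<Phi> g t (\<lambda>I::nat \<Rightarrow> 'n::finite. gbpa_Ghat \<Phi> g I t $ j) = (\<Sum>s\<in>{1..t}. g s $ j)"
proof (induction t)
  case 0 then show ?case by (simp add: Ex_0)
next
  case (Suc t)
  have step: "(\<Sum>i\<in>UNIV. P \<eta> \<alpha> G $ i * (G + (g (Suc t) $ i / P \<eta> \<alpha> G $ i) *\<^sub>R axis i 1) $ j)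
      = G $ j + g (Suc t) $ j" for G :: "real^'n"
  proof -
    have "(\<Sum>i\<in>UNIV. P \<eta> \<alpha> G $ i * (G + (g (Suc t) $ i / P \<eta> \<alpha> G $ i) *\<^sub>R axis i 1) $ j)
        = (\<Sum>i\<in>UNIV. P \<eta> \<alpha> G $ i * G $ j + (if i = j then g (Suc t) $ j else 0))"
      by (rule sum.cong) (auto simp: axis_def distrib_left less_imp_neq[OF P_pos, symmetric])
    also have "\<dots> = G $ j + g (Suc t) $ j"
      by (simp add: sum.distrib sum_distrib_right[symmetric] P_sum)
    finally show ?thesis .
  qed
  have "Ex \<Phi> g (Suc t) (\<lambda>I::nat \<Rightarrow> 'n. gbpa_Ghat \<Phi> g I (Suc t) $ j)
      = Ex \<Phi> g t (\<lambda>I. gbpa_Ghat \<Phi> g I t $ j + g (Suc t) $ j)"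
    unfolding Ex_Suc grad_eq Ghat_Suc_upd step ..
  also have "\<dots> = (\<Sum>s\<in>{1..t}. g s $ j) + g (Suc t) $ j"
    by (simp add: Ex_add Ex_const Suc.IH)
  finally show ?case by simp
qed

lemma one_step:
  fixes G :: "real^'n::finite" and v :: "real^'n"
  assumes v: "\<And>i. -1 \<le> v $ i \<and> v $ i \<le> 0"
  shows "(\<Sum>i\<in>UNIV. P \<eta> \<alpha> G $ i * (\<Phi> (G + (v $ i / P \<eta> \<alpha> G $ i) *\<^sub>R axis i 1) - v $ i))
          \<le> \<Phi> G + real CARD('n) powr \<alpha> / (2 * \<eta> * \<alpha>)"
proof -
  let ?p = "P \<eta> \<alpha> G"
  have each: "?p $ i * (\<Phi> (G + (v $ i / ?p $ i) *\<^sub>R axis i 1) - v $ i)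
      \<le> ?p $ i * \<Phi> G + ?p $ i powr (1 - \<alpha>) / (2 * \<eta> * \<alpha>)" for i
  proof -
    define p where "p = ?p $ i"
    define x where "x = v $ i / p"
    have p: "0 < p" unfolding p_def by (rule P_pos)
    have x: "x \<le> 0" unfolding x_def using v[of i] p by (simp add: divide_nonpos_pos)
    have px: "p * x = v $ i" unfolding x_def using p by simp
    have sb: "\<Phi> (G + x *\<^sub>R axis i 1) \<le> \<Phi> G + p * x + x\<^sup>2 / (2 * \<eta> * \<alpha> * p powr (\<alpha> - 2))"
      using step_bound[OF x, of G i] unfolding p_def by simp
    have e1: "p powr (\<alpha> - 2) * p powr (1 - \<alpha>) = 1 / p"
    proof -
      have "p powr (\<alpha> - 2) * p powr (1 - \<alpha>) = p powr (-1)" using p by (simp add: powr_add[symmetric])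
      then show ?thesis using p by (simp add: powr_minus_divide)
    qed
    have e2: "p * (x\<^sup>2 / (2 * \<eta> * \<alpha> * p powr (\<alpha> - 2))) = (v $ i)\<^sup>2 * p powr (1 - \<alpha>) / (2 * \<eta> * \<alpha>)"
    proof -
      have pp: "p powr (\<alpha> - 2) = 1 / (p * p powr (1 - \<alpha>))" using e1 p
        by (simp add: field_simps)
      show ?thesis unfolding pp x_def using p eta a0 by (simp add: field_simps power2_eq_square)
    qed
    have "(- v $ i) * (- v $ i) \<le> 1" using v[of i] by (intro mult_le_one) auto
    then have v2: "(v $ i)\<^sup>2 \<le> 1" by (simp add: power2_eq_square)
    have "(v $ i)\<^sup>2 * p powr (1 - \<alpha>) / (2 * \<eta> * \<alpha>) \<le> 1 * p powr (1 - \<alpha>) / (2 * \<eta> * \<alpha>)"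
      using v2 eta a0 by (intro divide_right_mono mult_right_mono) auto
    moreover have "p * (\<Phi> (G + x *\<^sub>R axis i 1) - v $ i)
        \<le> p * (\<Phi> G + p * x + x\<^sup>2 / (2 * \<eta> * \<alpha> * p powr (\<alpha> - 2)) - v $ i)"
      using sb p by (intro mult_left_mono) auto
    moreover have "p * (\<Phi> G + p * x + x\<^sup>2 / (2 * \<eta> * \<alpha> * p powr (\<alpha> - 2)) - v $ i)
        = p * \<Phi> G + p * (x\<^sup>2 / (2 * \<eta> * \<alpha> * p powr (\<alpha> - 2)))"
      using px by (simp add: algebra_simps)
    ultimately show ?thesis unfolding p_def[symmetric] x_def[symmetric] e2 by simp
  qed
  have "(\<Sum>i\<in>UNIV. ?p $ i * (\<Phi> (G + (v $ i / ?p $ i) *\<^sub>R axis i 1) - v $ i))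
      \<le> (\<Sum>i\<in>UNIV. ?p $ i * \<Phi> G + ?p $ i powr (1 - \<alpha>) / (2 * \<eta> * \<alpha>))"
    by (intro sum_mono each)
  also have "\<dots> = \<Phi> G + (\<Sum>i\<in>UNIV. ?p $ i powr (1 - \<alpha>)) / (2 * \<eta> * \<alpha>)"
    by (simp add: sum.distrib sum_distrib_right[symmetric] P_sum sum_divide_distrib)
  also have "\<dots> \<le> \<Phi> G + real CARD('n) powr (1 - (1 - \<alpha>)) / (2 * \<eta> * \<alpha>)"
    using sum_powr_le[OF P_simplex[of G], of "1 - \<alpha>"] a0 a1 eta
    by (intro add_left_mono divide_right_mono) auto
  finally show ?thesis by simp
qed

end



lemma final_arith:
  fixes T N \<alpha> \<eta> :: real
  assumes T: "T \<ge> 1" and N: "N \<ge> 1" and a: "0 < \<alpha>" "\<alpha> < 1"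
    and eta: "\<eta> = sqrt (T * (1 - \<alpha>) / (2 * \<alpha>)) * N powr (\<alpha> - 1/2)"
  shows "\<eta> * N powr (1 - \<alpha>) / (1 - \<alpha>) + T * (N powr \<alpha> / (2 * \<eta> * \<alpha>))
         = sqrt (2 * T * N / (\<alpha> * (1 - \<alpha>)))"
proof -
  define s where "s = sqrt (T * (1 - \<alpha>) / (2 * \<alpha>))"
  define r where "r = N powr (\<alpha> - 1/2)"
  have s0: "0 < s" unfolding s_def using T a by simp
  have s2: "s\<^sup>2 = T * (1 - \<alpha>) / (2 * \<alpha>)" unfolding s_def using T a by simp
  have r0: "0 < r" unfolding r_def using N by simp
  have N1: "N powr (1 - \<alpha>) * r = sqrt N" unfolding r_def using N
    by (simp add: powr_add[symmetric] powr_half_sqrt)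
  have N2: "N powr \<alpha> = r * sqrt N"
  proof -
    have "N powr \<alpha> = N powr ((\<alpha> - 1/2) + 1/2)" by simp
    also have "\<dots> = r * sqrt N" unfolding r_def powr_add using N by (simp add: powr_half_sqrt)
    finally show ?thesis .
  qed
  have e: "\<eta> = s * r" unfolding eta s_def r_def ..
  have t1: "\<eta> * N powr (1 - \<alpha>) / (1 - \<alpha>) = s * sqrt N / (1 - \<alpha>)"
    unfolding e using N1 by (simp add: mult.assoc mult.commute)
  have TT: "T = 2 * \<alpha> * s\<^sup>2 / (1 - \<alpha>)" using s2 a by (simp add: field_simps)
  have t2: "T * (N powr \<alpha> / (2 * \<eta> * \<alpha>)) = s * sqrt N / (1 - \<alpha>)"
    unfolding e N2 using s0 r0 a by (subst TT) (simp add: field_simps power2_eq_square)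
  have sq: "(2 * s * sqrt N / (1 - \<alpha>))\<^sup>2 = 2 * T * N / (\<alpha> * (1 - \<alpha>))"
  proof -
    have "(2 * s * sqrt N / (1 - \<alpha>))\<^sup>2 = 4 * s\<^sup>2 * (sqrt N)\<^sup>2 / (1 - \<alpha>)\<^sup>2"
      by (simp add: power_divide power_mult_distrib)
    also have "\<dots> = 4 * (T * (1 - \<alpha>) / (2 * \<alpha>)) * N / (1 - \<alpha>)\<^sup>2" using s2 N by simp
    also have "\<dots> = 2 * T * N / (\<alpha> * (1 - \<alpha>))"
    proof -
      have "\<forall>b>0. 4 * (T * b / (2 * \<alpha>)) * N / b\<^sup>2 = 2 * T * N / (\<alpha> * b)"
        using a by (auto simp: field_simps power2_eq_square)
      then show ?thesis using a by (metis diff_gt_0_iff_gt)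
    qed
    finally show ?thesis .
  qed
  have "sqrt (2 * T * N / (\<alpha> * (1 - \<alpha>))) = 2 * s * sqrt N / (1 - \<alpha>)"
    using sq s0 N a by (intro real_sqrt_unique) auto
  moreover have "\<eta> * N powr (1 - \<alpha>) / (1 - \<alpha>) + T * (N powr \<alpha> / (2 * \<eta> * \<alpha>))
      = 2 * s * sqrt N / (1 - \<alpha>)"
    unfolding t1 t2 by (simp add: add_divide_distrib[symmetric])
  ultimately show ?thesis by simp
qed

context tpar
begin

lemma Ex_main:
  fixes g :: "nat \<Rightarrow> real^'n::finite"
  assumes g: "\<forall>s\<in>{1..T}. \<forall>i. -1 \<le> g s $ i \<and> g s $ i \<le> 0"
  shows "t \<le> T \<Longrightarrow> Ex \<Phi> g t (\<lambda>I. \<Phi> (gbpa_Ghat \<Phi> g I t) - (\<Sum>s\<in>{1..t}. g s $ I s))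
           \<le> \<Phi> (0::real^'n) + real t * (real CARD('n) powr \<alpha> / (2 * \<eta> * \<alpha>))"
proof (induction t)
  case 0 then show ?case by (simp add: Ex_0)
next
  case (Suc t)
  define C where "C = real CARD('n) powr \<alpha> / (2 * \<eta> * \<alpha>)"
  have gs: "\<And>i. -1 \<le> g (Suc t) $ i \<and> g (Suc t) $ i \<le> 0" using g Suc.prems by auto
  have ssum: "(\<Sum>s\<in>{1..Suc t}. g s $ (I(Suc t := i)) s) = (\<Sum>s\<in>{1..t}. g s $ I s) + g (Suc t) $ i"
    for I :: "nat \<Rightarrow> 'n" and i
  proof -
    have "(\<Sum>s\<in>{1..t}. g s $ (I(Suc t := i)) s) = (\<Sum>s\<in>{1..t}. g s $ I s)"
      by (rule sum.cong) auto
    then show ?thesis by simp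
  qed
  have pt: "(\<Sum>i\<in>UNIV. P \<eta> \<alpha> (gbpa_Ghat \<Phi> g I t) $ i *
        (\<Phi> (gbpa_Ghat \<Phi> g (I(Suc t := i)) (Suc t)) - (\<Sum>s\<in>{1..Suc t}. g s $ (I(Suc t := i)) s)))
      \<le> (\<Phi> (gbpa_Ghat \<Phi> g I t) - (\<Sum>s\<in>{1..t}. g s $ I s)) + C" for I :: "nat \<Rightarrow> 'n"
  proof -
    let ?G = "gbpa_Ghat \<Phi> g I t"
    let ?S = "\<Sum>s\<in>{1..t}. g s $ I s"
    have "(\<Sum>i\<in>UNIV. P \<eta> \<alpha> ?G $ i *
        (\<Phi> (gbpa_Ghat \<Phi> g (I(Suc t := i)) (Suc t)) - (\<Sum>s\<in>{1..Suc t}. g s $ (I(Suc t := i)) s)))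
      = (\<Sum>i\<in>UNIV. P \<eta> \<alpha> ?G $ i *
          (\<Phi> (?G + (g (Suc t) $ i / P \<eta> \<alpha> ?G $ i) *\<^sub>R axis i 1) - g (Suc t) $ i) - P \<eta> \<alpha> ?G $ i * ?S)"
      by (intro sum.cong refl) (subst Ghat_Suc_upd, subst ssum, simp add: algebra_simps)
    also have "\<dots> = (\<Sum>i\<in>UNIV. P \<eta> \<alpha> ?G $ i *
          (\<Phi> (?G + (g (Suc t) $ i / P \<eta> \<alpha> ?G $ i) *\<^sub>R axis i 1) - g (Suc t) $ i)) - ?S"
      by (simp add: sum_subtractf sum_distrib_right[symmetric] P_sum)
    also have "\<dots> \<le> \<Phi> ?G + C - ?S"
      using one_step[OF gs, of ?G] unfolding C_def by linarith
    finally show ?thesis by simp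
  qed
  have "Ex \<Phi> g (Suc t) (\<lambda>I. \<Phi> (gbpa_Ghat \<Phi> g I (Suc t)) - (\<Sum>s\<in>{1..Suc t}. g s $ I s))
      \<le> Ex \<Phi> g t (\<lambda>I. (\<Phi> (gbpa_Ghat \<Phi> g I t) - (\<Sum>s\<in>{1..t}. g s $ I s)) + C)"
    unfolding Ex_Suc grad_eq by (rule Ex_mono) (rule pt)
  also have "\<dots> = Ex \<Phi> g t (\<lambda>I. \<Phi> (gbpa_Ghat \<Phi> g I t) - (\<Sum>s\<in>{1..t}. g s $ I s)) + C"
    by (simp add: Ex_add Ex_const)
  also have "\<dots> \<le> \<Phi> (0::real^'n) + real t * C + C"
    using Suc by (simp add: C_def)
  also have "\<Phi> (0::real^'n) + real t * C + C = \<Phi> (0::real^'n) + real (Suc t) * C"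
    by (simp add: algebra_simps)
  finally show ?case by (simp only: C_def)
qed

end



theorem corollary1:
  fixes g :: "nat \<Rightarrow> real^'n" and T :: nat and \<alpha> \<eta> :: real
  assumes "CARD('n) \<ge> 2"
    and "T \<ge> 1"
    and "0 < \<alpha>" and "\<alpha> < 1"
    and "\<eta> = sqrt (real T * (1 - \<alpha>) / (2 * \<alpha>)) * real CARD('n) powr (\<alpha> - 1/2)"
    and "\<forall>t\<in>{1..T}. \<forall>i. -1 \<le> g t $ i \<and> g t $ i \<le> 0"
  shows "gbpa_expected_regret (tsallis_potential \<eta> \<alpha>) g T
           \<le> sqrt (2 * real T * real CARD('n) / (\<alpha> * (1 - \<alpha>)))"
proof -
  note N2 = assms(1) and T1 = assms(2) and a0 = assms(3) and a1 = assms(4)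
    and etadef = assms(5) and gb = assms(6)
  have eta: "0 < \<eta>" unfolding etadef using T1 a0 a1 by simp
  interpret tpar \<eta> \<alpha> using eta a0 a1 by unfold_locales
  define N where "N = real CARD('n)"
  define C where "C = N powr \<alpha> / (2 * \<eta> * \<alpha>)"
  define A where "A = (\<lambda>i. \<Sum>s\<in>{1..T}. g s $ i)"
  define S where "S = (\<lambda>I::nat \<Rightarrow> 'n. \<Sum>s\<in>{1..T}. g s $ I s)"
  have "Max (range A) \<in> range A" by (intro Max_in) auto
  then obtain k where k: "Max (range A) = A k" by blast
  have Ak: "\<And>i. A i \<le> A k" unfolding k[symmetric] by (intro Max_ge) auto
  have reg: "regret g T I \<le> A k - S I" for I
    unfolding regret_def
  proof (intro Max.boundedI)
    show "finite ((\<lambda>i. \<Sum>t\<in>{1..T}. g t $ i - g t $ I t) ` UNIV)" by simp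
    show "(\<lambda>i. \<Sum>t\<in>{1..T}. g t $ i - g t $ I t) ` UNIV \<noteq> {}" by simp
    fix x assume "x \<in> (\<lambda>i. \<Sum>t\<in>{1..T}. g t $ i - g t $ I t) ` UNIV"
    then obtain i where x: "x = (\<Sum>t\<in>{1..T}. g t $ i - g t $ I t)" by auto
    have "x = A i - S I" unfolding x A_def S_def by (simp add: sum_subtractf)
    then show "x \<le> A k - S I" using Ak[of i] by simp
  qed
  have "gbpa_expected_regret \<Phi> g T = Ex \<Phi> g T (regret g T)"
    unfolding gbpa_expected_regret_def Ex_def ..
  also have "\<dots> \<le> Ex \<Phi> g T (\<lambda>I. A k - S I)"
    by (rule Ex_mono) (rule reg)
  also have "\<dots> = Ex \<Phi> g T (\<lambda>I. gbpa_Ghat \<Phi> g I T $ k - S I)"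
    by (simp add: Ex_diff Ex_const Ex_mart A_def)
  also have "\<dots> \<le> Ex \<Phi> g T (\<lambda>I. \<Phi> (gbpa_Ghat \<Phi> g I T) - S I)"
    by (rule Ex_mono) (simp add: pot_ge_coord)
  also have "\<dots> \<le> \<Phi> (0::real^'n) + real T * C"
    unfolding S_def C_def N_def by (rule Ex_main[OF gb order_refl])
  also have "\<dots> \<le> \<eta> * N powr (1 - \<alpha>) / (1 - \<alpha>) + real T * C"
    using pot_zero unfolding N_def by simp
  also have "\<dots> = sqrt (2 * real T * N / (\<alpha> * (1 - \<alpha>)))"
    unfolding C_def by (rule final_arith) (use T1 N2 a0 a1 etadef in \<open>auto simp: N_def\<close>)
  finally show ?thesis unfolding N_def .
qed


end
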